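(* Let $\varepsilon>0$ and $r_c>0$, and let $\mathbf{X}=(x_1,x_2,x_3):(0,S)\times[0,T_* )\to\mathbb{R}^3$ be a smooth solution of $$\mathbf{X}_t = \frac{\mathbf{X}_s \wedge \mathbf{X}_{ss}}{|\mathbf{X}_s|^3} - \frac{\varepsilon\, x_1}{x_1^2 + r_c^2}\, \frac{\mathbf{X}_s\wedge \mathbf{e}_1 }{|\mathbf{X}_s|}$$ with $\mathbf{X}_s(s,t)\neq 0$ for all $(s,t)$. Then there is a function $L_0$ of $s$ alone (determined by the initial data) such that the modulus of the tangential vector $\mathbf{T}=\mathbf{X}_s$ satisfies $$|\mathbf{T}(s,t)| = L_0(s)\,\bigl(x_1^2(s,t) + r_c^2\bigr)^{-\varepsilon/2}\quad\text{for all }(s,t).$$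
   Context: $\mathbf{e}_1=(1,0,0)$, $\wedge$ denotes the cross product in $\mathbb{R}^3$, subscripts $s,t$ denote partial derivatives. The equation models a vortex filament $\mathbf{X}$ interacting with its mirror image in the plane $x_1=0$ (antiparallel vortex pair), with interaction strength $\varepsilon$ and regularization parameter $r_c$. *)

theory Defs
  imports "HOL-Analysis.Analysis"
begin

datatype pvar = Sv | Tv

fun dirv :: "pvar \<Rightarrow> real \<times> real" where
  "dirv Sv = (1, 0)"
| "dirv Tv = (0, 1)"

text \<open>Partial derivative of g in the coordinate direction v, relative to the domain U
  (one-sided at boundary points of U such as t = 0).\<close>
definition pd :: "(real \<times> real) set \<Rightarrow> pvar \<Rightarrow> (real \<times> real \<Rightarrow> 'a::real_normed_vector)
                   \<Rightarrow> real \<times> real \<Rightarrow> 'a" where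
  "pd U v g = (\<lambda>p. vector_derivative (\<lambda>h. g (p + h *\<^sub>R dirv v))
                       (at 0 within {h. p + h *\<^sub>R dirv v \<in> U}))"

fun iter_pd :: "(real \<times> real) set \<Rightarrow> pvar list \<Rightarrow> (real \<times> real \<Rightarrow> 'a::real_normed_vector)
                  \<Rightarrow> real \<times> real \<Rightarrow> 'a" where
  "iter_pd U [] g = g"
| "iter_pd U (v # vs) g = pd U v (iter_pd U vs g)"

definition smooth_on :: "(real \<times> real) set \<Rightarrow> (real \<times> real \<Rightarrow> 'a::real_normed_vector) \<Rightarrow> bool" where
  "smooth_on U g \<longleftrightarrow>
     (\<forall>vs. continuous_on U (iter_pd U vs g) \<and>
        (\<forall>v. \<forall>p\<in>U. ((\<lambda>h. iter_pd U vs g (p + h *\<^sub>R dirv v))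
                        has_vector_derivative pd U v (iter_pd U vs g) p)
                     (at 0 within {h. p + h *\<^sub>R dirv v \<in> U})))"

definition e1 :: "real^3" where "e1 = axis 1 1"

end

theory Submission imports Defs begin

lemma shift_vd:
  fixes f :: "real \<Rightarrow> 'a::real_normed_vector"
  assumes "((\<lambda>h. f (a + h)) has_vector_derivative D) (at 0 within {h. a + h \<in> A})"
  shows "(f has_vector_derivative D) (at a within A)"
proof -
  have i: "((\<lambda>x. x - a) has_vector_derivative 1) (at a within A)"
    by (auto intro!: derivative_eq_intros)
  have img: "(\<lambda>x. x - a) ` A = {h. a + h \<in> A}"
    by (auto simp: image_iff intro!: bexI[where x="a + _"])
  have "(((\<lambda>h. f (a + h)) \<circ> (\<lambda>x. x - a)) has_vector_derivative (1 *\<^sub>R D)) (at a within A)"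
    by (rule vector_diff_chain_within[OF i]) (use assms img in simp)
  then show ?thesis by (simp add: o_def)
qed

lemma norm_vd:
  fixes A :: "real \<Rightarrow> 'a::real_inner"
  assumes "(A has_vector_derivative A') (at x within S)" "A x \<noteq> 0"
  shows "((\<lambda>x. norm (A x)) has_real_derivative (A x \<bullet> A') / norm (A x)) (at x within S)"
proof -
  have "((\<lambda>x. norm (A x)) has_derivative (\<lambda>h. h * (A' \<bullet> sgn (A x)))) (at x within S)"
    using has_derivative_compose[OF assms(1)[unfolded has_vector_derivative_def] has_derivative_norm[OF assms(2)]]
    by (simp add: o_def)
  then show ?thesis
    unfolding has_field_derivative_def
    by (rule has_derivative_eq_rhs) (auto simp: sgn_div_norm inner_commute fun_eq_iff field_simps)
qed

lemma bb_cross: "bounded_bilinear cross3"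
  using bilinear_cross bilinear_conv_bounded_bilinear by blast

lemma triple: "(a::real^3) \<bullet> cross3 b e1 = cross3 a b $ 1"
  by (simp add: e1_def cross3_simps axis_def)



theorem mainTheorem1:
  fixes \<epsilon> r\<^sub>c S Tstar :: real
    and X :: "real \<times> real \<Rightarrow> real^3"
  defines "U \<equiv> {0<..<S} \<times> {0..<Tstar}"
  assumes eps_pos: "\<epsilon> > 0" and rc_pos: "r\<^sub>c > 0"
    and smooth: "smooth_on U X"
    and nonzero: "\<forall>p\<in>U. pd U Sv X p \<noteq> 0"
    and eqn: "\<forall>p\<in>U.
        pd U Tv X p =
          (1 / norm (pd U Sv X p) ^ 3) *\<^sub>R (cross3 (pd U Sv X p) (pd U Sv (pd U Sv X) p))
          - (\<epsilon> * (X p $ 1) / ((X p $ 1)\<^sup>2 + r\<^sub>c\<^sup>2) / norm (pd U Sv X p))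
              *\<^sub>R (cross3 (pd U Sv X p) e1)"
  shows "\<exists>L\<^sub>0 :: real \<Rightarrow> real. \<forall>s t. (s, t) \<in> U \<longrightarrow>
           norm (pd U Sv X (s, t)) = L\<^sub>0 s * ((X (s, t) $ 1)\<^sup>2 + r\<^sub>c\<^sup>2) powr (- \<epsilon> / 2)"
proof -
  define J where "J = {0<..<S::real}"
  define I where "I = {0..<Tstar::real}"
  have U: "U = J \<times> I" by (simp add: U_def J_def I_def)
  have cont: "\<And>vs. continuous_on U (iter_pd U vs X)"
    using smooth by (simp add: smooth_on_def)
  have sm: "\<And>vs v p. p \<in> U \<Longrightarrow> ((\<lambda>h. iter_pd U vs X (p + h *\<^sub>R dirv v))
                        has_vector_derivative pd U v (iter_pd U vs X) p)
                     (at 0 within {h. p + h *\<^sub>R dirv v \<in> U})"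
    using smooth by (simp add: smooth_on_def)
  have DS: "((\<lambda>\<sigma>. iter_pd U vs X (\<sigma>, \<tau>)) has_vector_derivative pd U Sv (iter_pd U vs X) (\<sigma>, \<tau>)) (at \<sigma> within J)"
    if "\<sigma> \<in> J" "\<tau> \<in> I" for vs \<sigma> \<tau>
  proof (rule shift_vd)
    have e: "{h. (\<sigma>, \<tau>) + h *\<^sub>R dirv Sv \<in> U} = {h. \<sigma> + h \<in> J}" using that by (auto simp: U)
    show "((\<lambda>h. iter_pd U vs X (\<sigma> + h, \<tau>)) has_vector_derivative pd U Sv (iter_pd U vs X) (\<sigma>, \<tau>))
        (at 0 within {h. \<sigma> + h \<in> J})"
      using sm[of "(\<sigma>, \<tau>)" vs Sv] that unfolding e by (simp add: U)
  qed
  have DT: "((\<lambda>\<tau>. iter_pd U vs X (\<sigma>, \<tau>)) has_vector_derivative pd U Tv (iter_pd U vs X) (\<sigma>, \<tau>)) (at \<tau> within I)"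
    if "\<sigma> \<in> J" "\<tau> \<in> I" for vs \<sigma> \<tau>
  proof (rule shift_vd)
    have e: "{h. (\<sigma>, \<tau>) + h *\<^sub>R dirv Tv \<in> U} = {h. \<tau> + h \<in> I}" using that by (auto simp: U)
    show "((\<lambda>h. iter_pd U vs X (\<sigma>, \<tau> + h)) has_vector_derivative pd U Tv (iter_pd U vs X) (\<sigma>, \<tau>))
        (at 0 within {h. \<tau> + h \<in> I})"
      using sm[of "(\<sigma>, \<tau>)" vs Tv] that unfolding e by (simp add: U)
  qed
  define Xs where "Xs = pd U Sv X"
  define Xt where "Xt = pd U Tv X"
  define Xss where "Xss = pd U Sv Xs"
  define Xts where "Xts = pd U Sv Xt"
  have dXs: "((\<lambda>\<sigma>. X (\<sigma>, \<tau>)) has_vector_derivative Xs (\<sigma>, \<tau>)) (at \<sigma> within J)"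
    if "\<sigma> \<in> J" "\<tau> \<in> I" for \<sigma> \<tau> using DS[OF that, of "[]"] by (simp add: Xs_def)
  have dXss: "((\<lambda>\<sigma>. Xs (\<sigma>, \<tau>)) has_vector_derivative Xss (\<sigma>, \<tau>)) (at \<sigma> within J)"
    if "\<sigma> \<in> J" "\<tau> \<in> I" for \<sigma> \<tau> using DS[OF that, of "[Sv]"] by (simp add: Xs_def Xss_def)
  have dXsss: "((\<lambda>\<sigma>. Xss (\<sigma>, \<tau>)) has_vector_derivative pd U Sv Xss (\<sigma>, \<tau>)) (at \<sigma> within J)"
    if "\<sigma> \<in> J" "\<tau> \<in> I" for \<sigma> \<tau> using DS[OF that, of "[Sv,Sv]"] by (simp add: Xs_def Xss_def)
  have dXt: "((\<lambda>\<tau>. X (\<sigma>, \<tau>)) has_vector_derivative Xt (\<sigma>, \<tau>)) (at \<tau> within I)"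
    if "\<sigma> \<in> J" "\<tau> \<in> I" for \<sigma> \<tau> using DT[OF that, of "[]"] by (simp add: Xt_def)
  have dXts: "((\<lambda>\<sigma>. Xt (\<sigma>, \<tau>)) has_vector_derivative Xts (\<sigma>, \<tau>)) (at \<sigma> within J)"
    if "\<sigma> \<in> J" "\<tau> \<in> I" for \<sigma> \<tau> using DS[OF that, of "[Tv]"] by (simp add: Xt_def Xts_def)
  have cXt: "continuous_on U Xt" using cont[of "[Tv]"] by (simp add: Xt_def)
  have cXts: "continuous_on U Xts" using cont[of "[Sv,Tv]"] by (simp add: Xt_def Xts_def)
  have nbot: "at \<sigma> within J \<noteq> bot" if "\<sigma> \<in> J" for \<sigma>
  proof -
    have "open J" by (simp add: J_def)
    then show ?thesis using that by (metis at_within_open at_neq_bot)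
  qed
  have sub: "{0..\<tau>} \<subseteq> I" if "\<tau> \<in> I" for \<tau> using that by (auto simp: I_def)
  have Q1: "X (\<sigma>, \<tau>) = X (\<sigma>, 0) + integral {0..\<tau>} (\<lambda>r. Xt (\<sigma>, r))"
    if "\<sigma> \<in> J" "\<tau> \<in> I" for \<sigma> \<tau>
  proof -
    have "((\<lambda>r. Xt (\<sigma>, r)) has_integral (X (\<sigma>, \<tau>) - X (\<sigma>, 0))) {0..\<tau>}"
      using that sub[OF that(2)]
      by (intro fundamental_theorem_of_calculus)
         (auto simp: I_def intro: has_vector_derivative_within_subset[OF dXt])
    then show ?thesis by (simp add: integral_unique)
  qed
  have key: "\<exists>c. \<forall>t\<in>I. (Xs (s0, t) \<bullet> Xs (s0, t)) * ((X (s0, t) $ 1)\<^sup>2 + r\<^sub>c\<^sup>2) powr \<epsilon> = c"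
    if s0: "s0 \<in> J" for s0
  proof -
    have cXt1: "continuous_on {0..\<tau>} (\<lambda>r. Xt (\<sigma>, r))" if "\<sigma> \<in> J" "\<tau> \<in> I" for \<sigma> \<tau>
      by (rule continuous_on_compose2[OF cXt]) (use that sub[OF that(2)] in \<open>auto simp: U intro!: continuous_intros\<close>)
    have cXts1: "continuous_on {0..\<tau>} (\<lambda>r. Xts (\<sigma>, r))" if "\<sigma> \<in> J" "\<tau> \<in> {0..<Tstar}" for \<sigma> \<tau>
      by (rule continuous_on_compose2[OF cXts]) (use that in \<open>auto simp: U I_def intro!: continuous_intros\<close>)
    have Q3: "Xs (s0, \<tau>) = Xs (s0, 0) + integral {0..\<tau>} (\<lambda>r. Xts (s0, r))" if \<tau>: "\<tau> \<in> I" for \<tau>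
    proof -
      have "0 \<in> I" using \<tau> by (auto simp: I_def)
      have L: "((\<lambda>\<sigma>. integral (cbox 0 \<tau>) (\<lambda>r. Xt (\<sigma>, r))) has_vector_derivative
                 integral (cbox 0 \<tau>) (\<lambda>r. Xts (s0, r))) (at s0 within J)"
      proof (rule leibniz_rule_vector_derivative[where f="\<lambda>\<sigma> r. Xt (\<sigma>, r)" and fx="\<lambda>\<sigma> r. Xts (\<sigma>, r)"])
        show "((\<lambda>x. Xt (x, r)) has_vector_derivative Xts (x, r)) (at x within J)"
          if "x \<in> J" "r \<in> cbox 0 \<tau>" for x r
          using that sub[OF \<tau>] by (intro dXts) auto
        show "(\<lambda>r. Xt (x, r)) integrable_on cbox 0 \<tau>" if "x \<in> J" for x
          using cXt1[OF that \<tau>] by (simp add: integrable_continuous_interval)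
        show "continuous_on (J \<times> cbox 0 \<tau>) (\<lambda>(x, r). Xts (x, r))"
          unfolding case_prod_eta
          by (rule continuous_on_subset[OF cXts]) (use sub[OF \<tau>] in \<open>auto simp: U\<close>)
        show "s0 \<in> J" by (rule s0)
        show "convex J" by (simp add: J_def)
      qed
      have L2: "((\<lambda>\<sigma>. X (\<sigma>, 0) + integral {0..\<tau>} (\<lambda>r. Xt (\<sigma>, r))) has_vector_derivative
                 Xs (s0, 0) + integral {0..\<tau>} (\<lambda>r. Xts (s0, r))) (at s0 within J)"
        using has_vector_derivative_add[OF dXs[OF s0 \<open>0 \<in> I\<close>] L] by simp
      have L3: "((\<lambda>\<sigma>. X (\<sigma>, \<tau>)) has_vector_derivative
                 Xs (s0, 0) + integral {0..\<tau>} (\<lambda>r. Xts (s0, r))) (at s0 within J)"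
        by (rule has_vector_derivative_transform[OF s0 _ L2]) (use Q1 \<tau> in auto)
      show ?thesis
        by (rule vector_derivative_unique_within[OF nbot[OF s0] dXs[OF s0 \<tau>] L3])
    qed
    have Q4: "((\<lambda>\<tau>. Xs (s0, \<tau>)) has_vector_derivative Xts (s0, t)) (at t within I)"
      if t: "t \<in> I" for t
    proof -
      define b where "b = (t + Tstar) / 2"
      have tb: "t < b" "b < Tstar" "0 \<le> t" using t by (auto simp: b_def I_def)
      have cb: "continuous_on {0..b} (\<lambda>r. Xts (s0, r))"
        by (rule cXts1[OF s0]) (use tb in auto)
      have "((\<lambda>\<tau>. Xs (s0, 0) + integral {0..\<tau>} (\<lambda>r. Xts (s0, r))) has_vector_derivative Xts (s0, t))
              (at t within {0..b})"
        using has_vector_derivative_add[OF has_vector_derivative_const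
                integral_has_vector_derivative[OF cb, of t]] tb by simp
      then have "((\<lambda>\<tau>. Xs (s0, \<tau>)) has_vector_derivative Xts (s0, t)) (at t within {0..b})"
        by (rule has_vector_derivative_transform[rotated 2]) (use tb in \<open>auto intro!: Q3 simp: I_def\<close>)
      moreover have "at t within {0..b} = at t within I"
        by (rule at_within_nhd[of t "{..<b}"]) (use tb in \<open>auto simp: I_def\<close>)
      ultimately show ?thesis by simp
    qed
    show ?thesis
    proof (rule has_field_derivative_zero_constant)
      show "convex I" by (simp add: I_def)
      fix t assume t: "t \<in> I"
      define A where "A = Xs (s0, t)"
      define B where "B = Xss (s0, t)"
      define C where "C = pd U Sv Xss (s0, t)"
      define x0 where "x0 = X (s0, t) $ 1"
      define g0 where "g0 = x0\<^sup>2 + r\<^sub>c\<^sup>2"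
      have st: "(s0, t) \<in> U" using s0 t by (simp add: U)
      have nA: "A \<noteq> 0" using nonzero st by (simp add: A_def Xs_def)
      have g0: "g0 > 0" using rc_pos by (simp add: g0_def add_nonneg_pos)
      define \<alpha> where "\<alpha> \<sigma> = 1 / norm (Xs (\<sigma>, t)) ^ 3" for \<sigma>
      define \<beta> where "\<beta> \<sigma> = \<epsilon> * (X (\<sigma>, t) $ 1) / ((X (\<sigma>, t) $ 1)\<^sup>2 + r\<^sub>c\<^sup>2) / norm (Xs (\<sigma>, t))" for \<sigma>
      have dn: "((\<lambda>\<sigma>. norm (Xs (\<sigma>, t))) has_real_derivative (A \<bullet> B) / norm A) (at s0 within J)"
        using norm_vd[OF dXss[OF s0 t]] nA by (simp add: A_def B_def)
      have dx: "((\<lambda>\<sigma>. X (\<sigma>, t) $ 1) has_real_derivative A $ 1) (at s0 within J)"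
        using bounded_linear.has_vector_derivative[OF bounded_linear_vec_nth dXs[OF s0 t]]
        by (simp add: has_real_derivative_iff_has_vector_derivative A_def)
      have "\<exists>\<alpha>'. (\<alpha> has_real_derivative \<alpha>') (at s0 within J)"
        unfolding \<alpha>_def
        by (rule exI, rule DERIV_divide[OF DERIV_const DERIV_power[OF dn]]) (use nA in \<open>simp add: A_def\<close>)
      then obtain \<alpha>' where da: "(\<alpha> has_real_derivative \<alpha>') (at s0 within J)" by blast
      have gpos: "(X (\<sigma>, t) $ 1)\<^sup>2 + r\<^sub>c\<^sup>2 \<noteq> 0" for \<sigma>
        using rc_pos by (smt (verit) zero_le_power2 zero_less_power)
      have "\<exists>\<beta>'. (\<beta> has_real_derivative \<beta>') (at s0 within J)"
        unfolding \<beta>_def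
        by (rule exI, rule DERIV_divide[OF DERIV_divide[OF DERIV_cmult[OF dx] DERIV_add[OF DERIV_power[OF dx] DERIV_const]] dn])
           (use nA gpos in \<open>simp_all add: A_def\<close>)
      then obtain \<beta>' where db: "(\<beta> has_real_derivative \<beta>') (at s0 within J)" by blast
      define D where "D = (\<alpha> s0 *\<^sub>R (cross3 A C + cross3 B B) + \<alpha>' *\<^sub>R cross3 A B)
                         - (\<beta> s0 *\<^sub>R (cross3 A 0 + cross3 B e1) + \<beta>' *\<^sub>R cross3 A e1)"
      have dR: "((\<lambda>\<sigma>. \<alpha> \<sigma> *\<^sub>R cross3 (Xs (\<sigma>, t)) (Xss (\<sigma>, t)) - \<beta> \<sigma> *\<^sub>R cross3 (Xs (\<sigma>, t)) e1)
                   has_vector_derivative D) (at s0 within J)"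
        unfolding D_def A_def B_def C_def
        by (intro has_vector_derivative_diff has_vector_derivative_scaleR da db
              bounded_bilinear.has_vector_derivative[OF bb_cross] dXs[OF s0 t] dXss[OF s0 t]
              dXsss[OF s0 t] has_vector_derivative_const)
      have eqU: "Xt (\<sigma>, t) = \<alpha> \<sigma> *\<^sub>R cross3 (Xs (\<sigma>, t)) (Xss (\<sigma>, t)) - \<beta> \<sigma> *\<^sub>R cross3 (Xs (\<sigma>, t)) e1"
        if "\<sigma> \<in> J" for \<sigma>
        using eqn that t unfolding \<alpha>_def \<beta>_def Xt_def Xss_def Xs_def U by auto
      have dXt2: "((\<lambda>\<sigma>. Xt (\<sigma>, t)) has_vector_derivative D) (at s0 within J)"
        by (rule has_vector_derivative_transform[OF s0 _ dR]) (simp add: eqU)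
      have TD: "Xts (s0, t) = D"
        by (rule vector_derivative_unique_within[OF nbot[OF s0] dXts[OF s0 t] dXt2])
      have ATD: "A \<bullet> Xts (s0, t) = - \<beta> s0 * (A \<bullet> cross3 B e1)"
        by (simp add: TD D_def inner_diff_right inner_add_right dot_cross_self)
      have xt: "Xt (s0, t) $ 1 = \<alpha> s0 * (cross3 A B $ 1)"
        using eqU[OF s0] by (simp add: A_def B_def cross3_def e1_def axis_def)
      show "((\<lambda>t. (Xs (s0, t) \<bullet> Xs (s0, t)) * ((X (s0, t) $ 1)\<^sup>2 + r\<^sub>c\<^sup>2) powr \<epsilon>) has_field_derivative 0) (at t within I)"
      proof -
        have dx1: "((\<lambda>\<tau>. X (s0, \<tau>) $ 1) has_real_derivative Xt (s0, t) $ 1) (at t within I)"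
          using bounded_linear.has_vector_derivative[OF bounded_linear_vec_nth dXt[OF s0 t]]
          by (simp add: has_real_derivative_iff_has_vector_derivative)
        have dg: "((\<lambda>\<tau>. (X (s0, \<tau>) $ 1)\<^sup>2 + r\<^sub>c\<^sup>2) has_real_derivative 2 * x0 * Xt (s0, t) $ 1) (at t within I)"
          using DERIV_add[OF DERIV_power[OF dx1, of 2] DERIV_const[of "r\<^sub>c\<^sup>2"]] by (simp add: x0_def mult_ac)
        have g0': "(X (s0, t) $ 1)\<^sup>2 + r\<^sub>c\<^sup>2 > 0" using g0 by (simp add: g0_def x0_def)
        have dp: "((\<lambda>\<tau>. ((X (s0, \<tau>) $ 1)\<^sup>2 + r\<^sub>c\<^sup>2) powr \<epsilon>) has_real_derivative
                    (\<epsilon> * g0 powr (\<epsilon> - 1)) * (2 * x0 * Xt (s0, t) $ 1)) (at t within I)"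
          using DERIV_chain'[OF dg has_real_derivative_powr[OF g0', of \<epsilon>]] by (simp add: g0_def x0_def)
        have dip: "((\<lambda>\<tau>. Xs (s0, \<tau>) \<bullet> Xs (s0, \<tau>)) has_real_derivative (A \<bullet> Xts (s0, t) + Xts (s0, t) \<bullet> A)) (at t within I)"
          using bounded_bilinear.has_vector_derivative[OF bounded_bilinear_inner Q4[OF t] Q4[OF t]]
          by (simp add: has_real_derivative_iff_has_vector_derivative A_def)
        note dphi = DERIV_mult[OF dip dp]
        have P: "A \<bullet> cross3 B e1 = cross3 A B $ 1" by (rule triple)
        have ng: "norm A \<noteq> 0" using nA by simp
        have pw: "g0 powr \<epsilon> = g0 powr (\<epsilon> - 1) * g0"
          using powr_add[of g0 "\<epsilon> - 1" 1] g0 by simp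
        have "(A \<bullet> Xts (s0, t) + Xts (s0, t) \<bullet> A) * ((X (s0, t) $ 1)\<^sup>2 + r\<^sub>c\<^sup>2) powr \<epsilon> +
              \<epsilon> * g0 powr (\<epsilon> - 1) * (2 * x0 * Xt (s0, t) $ 1) * (Xs (s0, t) \<bullet> Xs (s0, t)) = 0"
        proof -
          have e1': "Xts (s0, t) \<bullet> A = A \<bullet> Xts (s0, t)" by (rule inner_commute)
          have "Xs (s0, t) \<bullet> Xs (s0, t) = (norm A)\<^sup>2" by (simp add: A_def power2_norm_eq_inner)
          moreover have "\<beta> s0 = \<epsilon> * x0 / g0 / norm A" by (simp add: \<beta>_def x0_def g0_def A_def)
          moreover have "\<alpha> s0 = 1 / norm A ^ 3" by (simp add: \<alpha>_def A_def)
          ultimately show ?thesis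
            unfolding e1' ATD xt P
            using ng g0 by (simp add: pw flip: g0_def x0_def) (simp add: field_simps power2_eq_square power3_eq_cube)
        qed
        with dphi show ?thesis by simp
      qed
    qed
  qed
  define L where "L s = sqrt ((Xs (s, 0) \<bullet> Xs (s, 0)) * ((X (s, 0) $ 1)\<^sup>2 + r\<^sub>c\<^sup>2) powr \<epsilon>)" for s
  show ?thesis
  proof (intro exI[of _ L] allI impI)
    fix s t assume st: "(s, t) \<in> U"
    then have s: "s \<in> J" and t: "t \<in> I" by (auto simp: U)
    then have z: "0 \<in> I" by (auto simp: I_def)
    obtain c where c: "\<forall>t\<in>I. (Xs (s, t) \<bullet> Xs (s, t)) * ((X (s, t) $ 1)\<^sup>2 + r\<^sub>c\<^sup>2) powr \<epsilon> = c"
      using key[OF s] by blast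
    define g where "g = (X (s, t) $ 1)\<^sup>2 + r\<^sub>c\<^sup>2"
    have gp: "g > 0" using rc_pos by (simp add: g_def add_nonneg_pos)
    have c0: "c = (Xs (s, 0) \<bullet> Xs (s, 0)) * ((X (s, 0) $ 1)\<^sup>2 + r\<^sub>c\<^sup>2) powr \<epsilon>"
      using c z by simp
    have cn: "c \<ge> 0" unfolding c0 by (intro mult_nonneg_nonneg inner_ge_zero powr_ge_zero)
    have Lsq: "(L s)\<^sup>2 = c" using cn by (simp add: L_def flip: c0)
    have Ln: "L s \<ge> 0" by (simp add: L_def)
    have "(Xs (s, t) \<bullet> Xs (s, t)) * g powr \<epsilon> = (L s)\<^sup>2" using c t Lsq by (simp add: g_def)
    then have "Xs (s, t) \<bullet> Xs (s, t) = (L s)\<^sup>2 * g powr (- \<epsilon>)"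
      using gp by (simp add: powr_minus field_simps)
    then have "norm (Xs (s, t)) = sqrt ((L s)\<^sup>2 * g powr (- \<epsilon>))"
      by (simp add: norm_eq_sqrt_inner)
    also have "\<dots> = L s * g powr (- \<epsilon> / 2)"
      using Ln gp powr_half_sqrt_powr[of g "- \<epsilon>"] by (simp add: real_sqrt_mult)
    finally show "norm (pd U Sv X (s, t)) = L s * ((X (s, t) $ 1)\<^sup>2 + r\<^sub>c\<^sup>2) powr (- \<epsilon> / 2)"
      by (simp add: Xs_def g_def)
  qed
qed

end
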